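(* In the static load balancing game described in the context, let $a$ be a pure Nash equilibrium and let $S(a)=\{j\in[m]: a_{ij}>0\text{ for some } i\in[n]\}$. Then the normalized loads on all servers in $S(a)$ are equal: $$L_j(a)=L:=\frac{\sum_{\ell\in S(a)}s_\ell^0+\sum_{i=1}^n\lambda_i}{\sum_{\ell\in S(a)}\mu_\ell}\qquad\text{for all } j\in S(a).$$
   Context: Static load balancing game: there are $m$ servers $[m]$ with service rates $\mu_j>0$ and initial loads $s_j^0\ge0$, and $n$ players $[n]$; player $i$ holds a job of length $\lambda_i>0$. Player $i$'s action set is $A_i=\{a_i=(a_{i1},\dots,a_{im}):\sum_j a_{ij}=1,\ a_{ij}\ge0\}$. The cost of player $i$ is $$D_i(a)=\sum_{j=1}^m \lambda_i a_{ij}\left(\frac{\lambda_i a_{ij}}{2\mu_j}+\frac{s_j^0+\sum_{k\neq i}\lambda_k a_{kj}}{\mu_j}\right).$$ A pure Nash equilibrium is a profile $a$ with $D_i(a_i,a_{-i})\le D_i(a_i',a_{-i})$ for all $i$, $a_i'\in A_i$. The normalized load on server $j$ under profile $a$ is $L_j(a)=\dfrac{s_j^0+\sum_{i=1}^n\lambda_ia_{ij}}{\mu_j}$. *)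

theory Defs
  imports "HOL-Analysis.Analysis"
begin

text \<open>Servers are indexed by 0..<m, players by 0..<n. A (pure) profile is
  a :: nat => nat => real with a i j the fraction of player i's job sent to server j.\<close>

definition action_set :: "nat \<Rightarrow> (nat \<Rightarrow> real) set" where
  "action_set m = {x. (\<Sum>j<m. x j) = 1 \<and> (\<forall>j<m. 0 \<le> x j)}"

definition profile :: "nat \<Rightarrow> nat \<Rightarrow> (nat \<Rightarrow> nat \<Rightarrow> real) \<Rightarrow> bool" where
  "profile n m a \<longleftrightarrow> (\<forall>i<n. a i \<in> action_set m)"

definition cost :: "nat \<Rightarrow> nat \<Rightarrow> (nat \<Rightarrow> real) \<Rightarrow> (nat \<Rightarrow> real) \<Rightarrow> (nat \<Rightarrow> real)
    \<Rightarrow> (nat \<Rightarrow> nat \<Rightarrow> real) \<Rightarrow> nat \<Rightarrow> real" where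
  "cost n m mu s0 lam a i =
     (\<Sum>j<m. lam i * a i j * (lam i * a i j / (2 * mu j)
        + (s0 j + (\<Sum>k\<in>{..<n} - {i}. lam k * a k j)) / mu j))"

definition nash_eq :: "nat \<Rightarrow> nat \<Rightarrow> (nat \<Rightarrow> real) \<Rightarrow> (nat \<Rightarrow> real) \<Rightarrow> (nat \<Rightarrow> real)
    \<Rightarrow> (nat \<Rightarrow> nat \<Rightarrow> real) \<Rightarrow> bool" where
  "nash_eq n m mu s0 lam a \<longleftrightarrow> profile n m a \<and>
     (\<forall>i<n. \<forall>x\<in>action_set m. cost n m mu s0 lam a i \<le> cost n m mu s0 lam (a(i := x)) i)"

definition load :: "nat \<Rightarrow> (nat \<Rightarrow> real) \<Rightarrow> (nat \<Rightarrow> real) \<Rightarrow> (nat \<Rightarrow> real)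
    \<Rightarrow> (nat \<Rightarrow> nat \<Rightarrow> real) \<Rightarrow> nat \<Rightarrow> real" where
  "load n mu s0 lam a j = (s0 j + (\<Sum>i<n. lam i * a i j)) / mu j"

definition support :: "nat \<Rightarrow> nat \<Rightarrow> (nat \<Rightarrow> nat \<Rightarrow> real) \<Rightarrow> nat set" where
  "support n m a = {j. j < m \<and> (\<exists>i<n. a i j > 0)}"

end

theory Submission
  imports Defs
begin

lemma two_point_sum:
  fixes h :: "nat \<Rightarrow> real"
  assumes "finite A" "j \<in> A" "k \<in> A" "j \<noteq> k" "\<forall>l\<in>A. l \<noteq> j \<and> l \<noteq> k \<longrightarrow> h l = 0"
  shows "sum h A = h j + h k"
proof -
  have "sum h A = sum h {j,k}"
    using assms by (intro sum.mono_neutral_right) auto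
  then show ?thesis using assms by simp
qed

lemma cost_upd:
  shows "cost n m mu s0 lam (a(i:=y)) i =
     (\<Sum>l<m. lam i * y l * (lam i * y l / (2 * mu l) + (s0 l + (\<Sum>k\<in>{..<n} - {i}. lam k * a k l)) / mu l))"
  unfolding cost_def
  by (intro sum.cong refl) (auto intro!: sum.cong)

lemma le_load:
  assumes mu: "\<forall>j<m. mu j > 0" and lam: "\<forall>i<n. lam i > 0"
    and nash: "nash_eq n m mu s0 lam a"
    and i: "i < n" and j: "j < m" and k: "k < m" and pos: "a i j > 0"
  shows "load n mu s0 lam a j \<le> load n mu s0 lam a k"
proof (rule ccontr)
  assume "\<not> ?thesis"
  hence lt: "load n mu s0 lam a k < load n mu s0 lam a j" by simp
  hence jk: "j \<noteq> k" by auto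
  define R where "R \<equiv> \<lambda>l. s0 l + (\<Sum>k\<in>{..<n} - {i}. lam k * a k l)"
  define l where "l = lam i"
  have lp: "l > 0" using lam i l_def by auto
  have muj: "mu j > 0" and muk: "mu k > 0" using mu j k by auto
  have Ld: "load n mu s0 lam a q = (R q + l * a i q) / mu q" for q
  proof -
    have "(\<Sum>i<n. lam i * a i q) = lam i * a i q + (\<Sum>k\<in>{..<n} - {i}. lam k * a k q)"
      using i by (subst sum.remove[of _ i]) auto
    thus ?thesis unfolding load_def R_def l_def by simp
  qed
  define Lj where "Lj = load n mu s0 lam a j"
  define Lk where "Lk = load n mu s0 lam a k"
  define d where "d = Lj - Lk"
  have dp: "d > 0" using lt Lj_def Lk_def d_def by simp
  define C where "C = 1/(2 * mu j) + 1/(2 * mu k)"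
  have Cp: "C > 0" using muj muk C_def by (simp add: add_pos_pos)
  define e where "e = min (a i j) (d / (2*l*C))"
  have ep: "e > 0" using pos dp lp Cp e_def by simp
  have ea: "e \<le> a i j" using e_def by simp
  have eC: "e * l * C \<le> d / 2"
  proof -
    have "e \<le> d / (2*l*C)" using e_def by simp
    hence "e * (l * C) \<le> d / (2*l*C) * (l * C)"
      using lp Cp by (intro mult_right_mono) auto
    also have "\<dots> = d / 2" using lp Cp by (simp add: field_simps)
    finally show ?thesis by (simp add: mult.assoc)
  qed
  define x where "x = (a i)(j := a i j - e, k := a i k + e)"
  have prof: "a i \<in> action_set m" using nash i unfolding nash_eq_def profile_def by auto
  have xa: "x \<in> action_set m"
  proof -
    have "(\<Sum>q<m. x q - a i q) = (x j - a i j) + (x k - a i k)"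
      using j k jk by (intro two_point_sum) (auto simp: x_def)
    also have "\<dots> = 0" using jk by (simp add: x_def)
    finally have "(\<Sum>q<m. x q) = (\<Sum>q<m. a i q)" by (simp add: sum_subtractf)
    moreover have "\<forall>q<m. 0 \<le> x q" using prof ea ep jk unfolding action_set_def x_def by auto
    ultimately show ?thesis using prof unfolding action_set_def by auto
  qed
  define g where "g = (\<lambda>q t. l * t * (l * t / (2 * mu q) + R q / mu q))"
  have c1: "cost n m mu s0 lam (a(i:=x)) i = (\<Sum>q<m. g q (x q))"
    using cost_upd[of n m mu s0 lam a i x] unfolding g_def R_def l_def by simp
  have c0: "cost n m mu s0 lam a i = (\<Sum>q<m. g q (a i q))"
    using cost_upd[of n m mu s0 lam a i "a i"] unfolding g_def R_def l_def by simp
  have "cost n m mu s0 lam a i \<le> cost n m mu s0 lam (a(i:=x)) i"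
    using nash i xa unfolding nash_eq_def by auto
  hence "0 \<le> (\<Sum>q<m. g q (x q)) - (\<Sum>q<m. g q (a i q))" using c0 c1 by simp
  also have "\<dots> = (\<Sum>q<m. g q (x q) - g q (a i q))" by (simp add: sum_subtractf)
  also have "\<dots> = (g j (x j) - g j (a i j)) + (g k (x k) - g k (a i k))"
    using j k jk by (intro two_point_sum) (auto simp: x_def)
  also have "\<dots> = (g j (a i j - e) - g j (a i j)) + (g k (a i k + e) - g k (a i k))"
    using jk by (simp add: x_def)
  also have "g j (a i j - e) - g j (a i j) = - e * l * Lj + l^2 * e^2 / (2 * mu j)"
    unfolding g_def Lj_def Ld using muj by (simp add: field_simps power2_eq_square)
  also have "g k (a i k + e) - g k (a i k) = e * l * Lk + l^2 * e^2 / (2 * mu k)"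
    unfolding g_def Lk_def Ld using muk by (simp add: field_simps power2_eq_square)
  also have "- e * l * Lj + l^2 * e^2 / (2 * mu j) + (e * l * Lk + l^2 * e^2 / (2 * mu k))
      = e * l * (e * l * C - d)"
    unfolding C_def d_def by (simp add: field_simps power2_eq_square)
  finally have "0 \<le> e * l * (e * l * C - d)" .
  moreover have "e * l * C - d < 0" using eC dp by simp
  moreover have "e * l > 0" using ep lp by simp
  ultimately have "e * l * (e * l * C - d) < 0" by (intro mult_pos_neg)
  thus False using \<open>0 \<le> e * l * (e * l * C - d)\<close> by linarith
qed

theorem lemma3:
  fixes n m :: nat and mu s0 lam :: "nat \<Rightarrow> real" and a :: "nat \<Rightarrow> nat \<Rightarrow> real"
  assumes "\<forall>j<m. mu j > 0"
    and "\<forall>j<m. s0 j \<ge> 0"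
    and "\<forall>i<n. lam i > 0"
    and "nash_eq n m mu s0 lam a"
  shows "\<forall>j\<in>support n m a. load n mu s0 lam a j =
           ((\<Sum>l\<in>support n m a. s0 l) + (\<Sum>i<n. lam i)) / (\<Sum>l\<in>support n m a. mu l)"
proof
  fix j assume jS: "j \<in> support n m a"
  let ?S = "support n m a"
  let ?L = "load n mu s0 lam a"
  have eq: "?L q = ?L j" if qS: "q \<in> ?S" for q
  proof -
    obtain i where "i < n" "a i j > 0" "j < m" using jS unfolding support_def by auto
    obtain i' where "i' < n" "a i' q > 0" "q < m" using qS unfolding support_def by auto
    show ?thesis using le_load[OF assms(1) assms(3) assms(4)] \<open>i < n\<close> \<open>a i j > 0\<close> \<open>j < m\<close>
        \<open>i' < n\<close> \<open>a i' q > 0\<close> \<open>q < m\<close> by (meson order_antisym)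
  qed
  have Ssub: "?S \<subseteq> {..<m}" unfolding support_def by auto
  have fin: "finite ?S" using Ssub finite_subset by blast
  have muS: "(\<Sum>l\<in>?S. mu l) > 0"
    using jS fin Ssub assms(1) by (intro sum_pos) auto
  have prof: "\<forall>i<n. a i \<in> action_set m" using assms(4) unfolding nash_eq_def profile_def by auto
  have rowsum: "(\<Sum>q\<in>?S. a i q) = 1" if "i < n" for i
  proof -
    have "(\<Sum>q\<in>?S. a i q) = (\<Sum>q<m. a i q)"
    proof (rule sum.mono_neutral_left)
      show "\<forall>q\<in>{..<m} - ?S. a i q = 0"
      proof
        fix q assume "q \<in> {..<m} - ?S"
        hence "q < m" "\<not> a i q > 0" using that unfolding support_def by auto
        thus "a i q = 0" using prof that unfolding action_set_def by force
      qed
    qed (use Ssub in auto)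
    thus ?thesis using prof that unfolding action_set_def by auto
  qed
  have "(\<Sum>q\<in>?S. mu q * ?L q) = (\<Sum>q\<in>?S. s0 q + (\<Sum>i<n. lam i * a i q))"
    using Ssub assms(1) by (intro sum.cong refl) (auto simp: load_def)
  also have "\<dots> = (\<Sum>q\<in>?S. s0 q) + (\<Sum>i<n. lam i * (\<Sum>q\<in>?S. a i q))"
    by (simp add: sum.distrib sum.swap[of _ ?S] sum_distrib_left)
  also have "\<dots> = (\<Sum>q\<in>?S. s0 q) + (\<Sum>i<n. lam i)"
    using rowsum by simp
  finally have "(\<Sum>q\<in>?S. mu q) * ?L j = (\<Sum>q\<in>?S. s0 q) + (\<Sum>i<n. lam i)"
    using eq by (simp add: sum_distrib_right)
  thus "?L j = ((\<Sum>l\<in>?S. s0 l) + (\<Sum>i<n. lam i)) / (\<Sum>l\<in>?S. mu l)"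
    using muS by (simp add: field_simps)
qed

end
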